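(* Let $\mathcal C=\mathcal C(I,A,(\rho_i)_{i\in I},(C^a)_{a\in A})$ be a connected Cartan scheme and $\mathcal R=\mathcal R(\mathcal C,(R^a)_{a\in A})$ a root system of type $\mathcal C$. Let $a\in A$ and $i,j\in I$ with $i\neq j$. The following are equivalent: (1) $c^a_{ij}=c^a_{ji}=0$; (2) $R^a\cap(\mathbb N_0\alpha_i+\mathbb N_0\alpha_j)=\{\alpha_i,\alpha_j\}$; (3) $m^a_{i,j}=2$.
   Context: Let $I$ be a nonempty finite set and $\{\alpha_i\mid i\in I\}$ the standard basis of $\mathbb Z^I$; $\mathbb N_0=\{0,1,2,\dots\}$. A generalized Cartan matrix is $C=(c_{ij})_{i,j\in I}\in\mathbb Z^{I\times I}$ with $c_{ii}=2$, $c_{jk}\le0$ for $j\ne k$, and $c_{ij}=0\Rightarrow c_{ji}=0$. A Cartan scheme $\mathcal C=\mathcal C(I,A,(\rho_i)_{i\in I},(C^a)_{a\in A})$ consists of a nonempty set $A$, maps $\rho_i:A\to A$ and generalized Cartan matrices $C^a=(c^a_{jk})_{j,k\in I}$ such that (C1) $\rho_i^2=\mathrm{id}$ and (C2) $c^a_{ij}=c^{\rho_i(a)}_{ij}$ for all $a\in A$, $i,j\in I$. It is connected if the group generated by the $\rho_i$ acts transitively on $A$. For $i\in I$, $a\in A$ let $\sigma_i^a\in\mathrm{Aut}(\mathbb Z^I)$, $\sigma_i^a(\alpha_j)=\alpha_j-c^a_{ij}\alpha_i$. A root system of type $\mathcal C$ is a family $\mathcal R=\mathcal R(\mathcal C,(R^a)_{a\in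 A})$ of subsets $R^a\subset\mathbb Z^I$ such that, writing $R^a_+=R^a\cap\mathbb N_0^I$ and $m^a_{i,j}=|R^a\cap(\mathbb N_0\alpha_i+\mathbb N_0\alpha_j)|$, for all $a\in A$, $i,j\in I$: (R1) $R^a=R^a_+\cup(-R^a_+)$; (R2) $R^a\cap\mathbb Z\alpha_i=\{\alpha_i,-\alpha_i\}$; (R3) $\sigma_i^a(R^a)=R^{\rho_i(a)}$; (R4) if $i\neq j$ and $m^a_{i,j}$ is finite then $(\rho_i\rho_j)^{m^a_{i,j}}(a)=a$. *)

theory Defs
  imports Main
begin

text \<open>The index set I is modelled as a finite type 'i (I = UNIV), the set A as a type 'a
  (A = UNIV, automatically nonempty). Elements of Z^I are functions 'i => int.\<close>

definition alpha :: "'i \<Rightarrow> ('i \<Rightarrow> int)" where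
  "alpha i = (\<lambda>j. if j = i then 1 else 0)"

definition gen_cartan_matrix :: "('i \<Rightarrow> 'i \<Rightarrow> int) \<Rightarrow> bool" where
  "gen_cartan_matrix c \<longleftrightarrow>
     (\<forall>i. c i i = 2) \<and> (\<forall>j k. j \<noteq> k \<longrightarrow> c j k \<le> 0) \<and> (\<forall>i j. c i j = 0 \<longrightarrow> c j i = 0)"

definition cartan_scheme :: "('i \<Rightarrow> 'a \<Rightarrow> 'a) \<Rightarrow> ('a \<Rightarrow> 'i \<Rightarrow> 'i \<Rightarrow> int) \<Rightarrow> bool" where
  "cartan_scheme rho C \<longleftrightarrow>
     (\<forall>a. gen_cartan_matrix (C a)) \<and>
     (\<forall>i a. rho i (rho i a) = a) \<and>
     (\<forall>a i j. C a i j = C (rho i a) i j)"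

text \<open>Connected: the group generated by the involutions rho_i acts transitively on A;
  since the generators are involutions, the orbits are the classes of the reflexive
  transitive closure of the relation a ~ rho_i a.\<close>
definition connected_cs :: "('i \<Rightarrow> 'a \<Rightarrow> 'a) \<Rightarrow> bool" where
  "connected_cs rho \<longleftrightarrow> (\<forall>a b. (a, b) \<in> {(x, rho i x) | x i. True}\<^sup>*)"

text \<open>sigma_i^a is the Z-linear map with alpha_j |-> alpha_j - c^a_ij alpha_i.\<close>
definition sigma :: "('a \<Rightarrow> 'i \<Rightarrow> 'i \<Rightarrow> int) \<Rightarrow> 'i \<Rightarrow> 'a \<Rightarrow> ('i::finite \<Rightarrow> int) \<Rightarrow> ('i \<Rightarrow> int)" where
  "sigma C i a v = (\<lambda>k. v k - (if k = i then (\<Sum>j\<in>UNIV. C a i j * v j) else 0))"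

definition pos_roots :: "('a \<Rightarrow> ('i \<Rightarrow> int) set) \<Rightarrow> 'a \<Rightarrow> ('i \<Rightarrow> int) set" where
  "pos_roots R a = R a \<inter> {v. \<forall>k. 0 \<le> v k}"

definition cone2 :: "'i \<Rightarrow> 'i \<Rightarrow> ('i \<Rightarrow> int) set" where
  "cone2 i j = {v. \<exists>p q :: nat. v = (\<lambda>k. int p * alpha i k + int q * alpha j k)}"

definition root_system ::
  "('i::finite \<Rightarrow> 'a \<Rightarrow> 'a) \<Rightarrow> ('a \<Rightarrow> 'i \<Rightarrow> 'i \<Rightarrow> int) \<Rightarrow> ('a \<Rightarrow> ('i \<Rightarrow> int) set) \<Rightarrow> bool" where
  "root_system rho C R \<longleftrightarrow>
     (\<forall>a. R a = pos_roots R a \<union> uminus ` pos_roots R a) \<and>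
     (\<forall>a i. R a \<inter> {v. \<exists>n::int. v = (\<lambda>k. n * alpha i k)} = {alpha i, - alpha i}) \<and>
     (\<forall>a i. sigma C i a ` R a = R (rho i a)) \<and>
     (\<forall>a i j. i \<noteq> j \<longrightarrow> finite (R a \<inter> cone2 i j) \<longrightarrow>
        ((rho i \<circ> rho j) ^^ card (R a \<inter> cone2 i j)) a = a)"

end

theory Submission
  imports Defs
begin

definition vv :: "'i \<Rightarrow> 'i \<Rightarrow> int \<Rightarrow> int \<Rightarrow> ('i \<Rightarrow> int)" where
  "vv i j p q = (\<lambda>k. p * alpha i k + q * alpha j k)"

lemma vv_i: "i \<noteq> j \<Longrightarrow> vv i j p q i = p" by (simp add: vv_def alpha_def)
lemma vv_j: "i \<noteq> j \<Longrightarrow> vv i j p q j = q" by (simp add: vv_def alpha_def)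
lemma vv_o: "k \<noteq> i \<Longrightarrow> k \<noteq> j \<Longrightarrow> vv i j p q k = 0" by (simp add: vv_def alpha_def)

lemma vv_eq: "i \<noteq> j \<Longrightarrow> vv i j p q = vv i j p' q' \<longleftrightarrow> p = p' \<and> q = q'"
  by (metis vv_i vv_j)

lemma alpha_i: "alpha i = vv i j 1 0" by (simp add: vv_def)
lemma alpha_j: "alpha j = vv i j 0 1" by (simp add: vv_def)

lemma cone2_vv: "cone2 i j = {v. \<exists>p q. 0 \<le> p \<and> 0 \<le> q \<and> v = vv i j p q}"
proof (intro set_eqI iffI)
  fix v assume "v \<in> cone2 i j"
  then obtain p q :: nat where "v = (\<lambda>k. int p * alpha i k + int q * alpha j k)"
    unfolding cone2_def by blast
  then have "0 \<le> int p \<and> 0 \<le> int q \<and> v = vv i j (int p) (int q)" by (simp add: vv_def)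
  then show "v \<in> {v. \<exists>p q. 0 \<le> p \<and> 0 \<le> q \<and> v = vv i j p q}" by blast
next
  fix v assume "v \<in> {v. \<exists>p q. 0 \<le> p \<and> 0 \<le> q \<and> v = vv i j p q}"
  then obtain p q where pq: "0 \<le> p" "0 \<le> q" "v = vv i j p q" by blast
  have "v = (\<lambda>k. int (nat p) * alpha i k + int (nat q) * alpha j k)"
    using pq by (simp add: vv_def)
  then show "v \<in> cone2 i j" unfolding cone2_def by blast
qed

lemma cone2_sym: "cone2 i j = cone2 j i"
proof -
  have "vv i j p q = vv j i q p" for p q by (simp add: vv_def add.commute)
  then show ?thesis unfolding cone2_vv by (metis (no_types, lifting))
qed

lemma alpha_cone: "alpha i \<in> cone2 i j" "alpha j \<in> cone2 i j"
proof -
  have "alpha i = vv i j 1 0" "alpha j = vv i j 0 1" by (rule alpha_i, rule alpha_j)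
  moreover have "(0::int) \<le> 1" "(0::int) \<le> 0" by simp_all
  ultimately show "alpha i \<in> cone2 i j" "alpha j \<in> cone2 i j" unfolding cone2_vv
    by blast+
qed

lemma sum_vv:
  fixes c :: "'i::finite \<Rightarrow> int"
  assumes "i \<noteq> j"
  shows "(\<Sum>l\<in>UNIV. c l * vv i j p q l) = c i * p + c j * q"
proof -
  have "(\<Sum>l\<in>UNIV. c l * vv i j p q l) = (\<Sum>l\<in>UNIV. (if l = i then c i * p else 0) + (if l = j then c j * q else 0))"
    by (rule sum.cong) (auto simp: vv_def alpha_def algebra_simps)
  also have "\<dots> = c i * p + c j * q" by (simp add: sum.distrib)
  finally show ?thesis .
qed

lemma sigma_vv:
  assumes "i \<noteq> j" "C a i i = 2"
  shows "sigma C i a (vv i j p q) = vv i j (- p - C a i j * q) q"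
proof
  fix k
  show "sigma C i a (vv i j p q) k = vv i j (- p - C a i j * q) q k"
    using assms unfolding sigma_def
    by (cases "k = i"; cases "k = j") (simp_all add: sum_vv vv_i vv_j vv_o)
qed

lemma rs_R1: "root_system rho C R \<Longrightarrow> R a = pos_roots R a \<union> uminus ` pos_roots R a"
  unfolding root_system_def by (drule conjunct1) (erule spec)
lemma rs_R2: "root_system rho C R \<Longrightarrow> R a \<inter> {v. \<exists>n::int. v = (\<lambda>k. n * alpha i k)} = {alpha i, - alpha i}"
  unfolding root_system_def by (drule conjunct2, drule conjunct1) (drule spec, drule spec, assumption)
lemma rs_R3: "root_system rho C R \<Longrightarrow> sigma C i a ` R a = R (rho i a)"
  unfolding root_system_def by (drule conjunct2, drule conjunct2, drule conjunct1) (drule spec, drule spec, assumption)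

lemma cs_ii: "cartan_scheme rho C \<Longrightarrow> C a i i = 2"
  unfolding cartan_scheme_def gen_cartan_matrix_def by (drule conjunct1, drule spec, drule conjunct1, drule spec, assumption)
lemma cs_le: "cartan_scheme rho C \<Longrightarrow> i \<noteq> j \<Longrightarrow> C a i j \<le> 0"
  unfolding cartan_scheme_def gen_cartan_matrix_def by (drule conjunct1, drule spec, drule conjunct2, drule conjunct1, drule spec, drule spec, drule mp, assumption, assumption)

lemma rs_sign:
  assumes "root_system rho C R" "v \<in> R a"
  shows "(\<forall>k. 0 \<le> v k) \<or> (\<forall>k. v k \<le> 0)"
proof -
  have "R a = pos_roots R a \<union> uminus ` pos_roots R a"
    using rs_R1[OF assms(1)] .
  with assms(2) have "v \<in> pos_roots R a \<or> v \<in> uminus ` pos_roots R a" by blast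
  then show ?thesis
  proof
    assume "v \<in> pos_roots R a" then show ?thesis unfolding pos_roots_def by blast
  next
    assume "v \<in> uminus ` pos_roots R a"
    then obtain w where "w \<in> pos_roots R a" "v = - w" by blast
    then have "\<forall>k. v k \<le> 0" unfolding pos_roots_def by simp
    then show ?thesis by blast
  qed
qed

lemma rs_mult:
  assumes "root_system rho C R" "(\<lambda>k. n * alpha i k) \<in> R a"
  shows "n = 1 \<or> n = -1"
proof -
  have "R a \<inter> {v. \<exists>n::int. v = (\<lambda>k. n * alpha i k)} = {alpha i, - alpha i}"
    using rs_R2[OF assms(1)] .
  with assms(2) have "(\<lambda>k. n * alpha i k) \<in> {alpha i, - alpha i}" by blast
  then have "(\<lambda>k. n * alpha i k) = alpha i \<or> (\<lambda>k. n * alpha i k) = - alpha i" by blast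
  then have "n * alpha i i = alpha i i \<or> n * alpha i i = - alpha i i"
  proof
    assume h: "(\<lambda>k. n * alpha i k) = alpha i"
    show ?thesis using fun_cong[OF h, of i] by simp
  next
    assume h: "(\<lambda>k. n * alpha i k) = - alpha i"
    show ?thesis using fun_cong[OF h, of i] by simp
  qed
  then show ?thesis by (simp add: alpha_def)
qed

lemma alpha_in: assumes "root_system rho C R" shows "alpha i \<in> R a"
proof -
  have "R a \<inter> {v. \<exists>n::int. v = (\<lambda>k. n * alpha i k)} = {alpha i, - alpha i}"
    using rs_R2[OF assms] .
  then show ?thesis by blast
qed

lemma dir1:
  assumes cs: "cartan_scheme rho C" and rs: "root_system rho C R" and ij: "i \<noteq> j"
    and c0: "C a i j = 0"
  shows "R a \<inter> cone2 i j = {alpha i, alpha j}"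
proof
  show "{alpha i, alpha j} \<subseteq> R a \<inter> cone2 i j" using alpha_in[OF rs, of i a] alpha_in[OF rs, of j a] alpha_cone(1)[where i=i and j=j] alpha_cone(2)[where i=i and j=j] by blast
next
  have cii: "C a i i = 2" using cs_ii[OF cs] .
  show "R a \<inter> cone2 i j \<subseteq> {alpha i, alpha j}"
  proof
    fix v assume v: "v \<in> R a \<inter> cone2 i j"
    then obtain p q where pq: "0 \<le> p" "0 \<le> q" "v = vv i j p q" unfolding cone2_vv by blast
    show "v \<in> {alpha i, alpha j}"
    proof (cases "p = 0")
      case True
      then have "v = (\<lambda>k. q * alpha j k)" using pq by (simp add: vv_def)
      then have "q = 1 \<or> q = -1" using rs_mult[OF rs] v by blast
      then show ?thesis using pq True by (auto simp: alpha_j[where i=i and j=j])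
    next
      case p: False
      show ?thesis
      proof (cases "q = 0")
        case True
        then have "v = (\<lambda>k. p * alpha i k)" using pq by (simp add: vv_def)
        then have "p = 1 \<or> p = -1" using rs_mult[OF rs] v by blast
        then show ?thesis using pq True by (auto simp: alpha_i[of i j])
      next
        case q: False
        have "sigma C i a v \<in> R (rho i a)" using rs_R3[OF rs, of i a, symmetric] v by blast
        moreover have "sigma C i a v = vv i j (-p) q" using sigma_vv[where C=C and a=a, OF ij cii] pq c0 by simp
        ultimately have "(\<forall>k. 0 \<le> vv i j (-p) q k) \<or> (\<forall>k. vv i j (-p) q k \<le> 0)"
          using rs_sign[OF rs] by metis
        then have "0 \<le> vv i j (-p) q i \<or> vv i j (-p) q j \<le> 0" by blast
        then show ?thesis using p q pq by (simp add: vv_i[OF ij] vv_j[OF ij])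
      qed
    qed
  qed
qed

lemma dir2:
  assumes cs: "cartan_scheme rho C" and rs: "root_system rho C R" and ij: "i \<noteq> j"
    and h: "R a \<inter> cone2 i j = {alpha i, alpha j}"
  shows "C a i j = 0"
proof -
  have cii: "C a i i = 2" and cle: "C a i j \<le> 0"
    using cs_ii[OF cs] cs_le[OF cs ij] by blast+
  have "alpha j \<in> R (rho i a)" using alpha_in[OF rs] .
  also have "R (rho i a) = sigma C i a ` R a" using rs_R3[OF rs, of i a, symmetric] .
  finally have "alpha j \<in> sigma C i a ` R a" .
  then obtain w where w1: "w \<in> R a" and w2: "alpha j = sigma C i a w" by (rule imageE)
  note w = w1 w2[symmetric]
  obtain p where p: "w i = p" by blast
  have wv: "w = vv i j p 1"
  proof
    fix k
    show "w k = vv i j p 1 k"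
    proof (cases "k = i")
      case True then show ?thesis using ij p by (simp add: vv_i)
    next
      case False
      have "sigma C i a w k = alpha j k" using w by simp
      then have "w k = alpha j k" using False by (simp add: sigma_def)
      then show ?thesis using False by (simp add: vv_def alpha_def)
    qed
  qed
  have "sigma C i a (vv i j p 1) = vv i j (- p - C a i j) 1"
    using sigma_vv[where C=C and a=a, OF ij cii, of p 1] by simp
  then have "vv i j (- p - C a i j) 1 = vv i j 0 1" using w wv alpha_j[where i=i and j=j] by metis
  then have wi: "p = - C a i j" using vv_eq[OF ij] by simp
  then have "0 \<le> p" using cle by simp
  then have "w \<in> cone2 i j" unfolding cone2_vv using wv
    by (intro CollectI exI[of _ p] exI[of _ 1]) simp
  then have "w \<in> {alpha i, alpha j}" using h w(1) by blast
  moreover have "w j = 1" using wv vv_j[OF ij] by metis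
  ultimately have "w i = 0" using ij unfolding alpha_def by auto
  then show ?thesis using wi p by simp
qed

theorem lemma4p4:
  fixes rho :: "'i::finite \<Rightarrow> 'a \<Rightarrow> 'a"
    and C :: "'a \<Rightarrow> 'i \<Rightarrow> 'i \<Rightarrow> int"
    and R :: "'a \<Rightarrow> ('i \<Rightarrow> int) set"
    and a :: 'a and i j :: 'i
  assumes "cartan_scheme rho C" and "connected_cs rho"
    and "root_system rho C R" and "i \<noteq> j"
  shows "((C a i j = 0 \<and> C a j i = 0) \<longleftrightarrow> R a \<inter> cone2 i j = {alpha i, alpha j})
       \<and> (R a \<inter> cone2 i j = {alpha i, alpha j} \<longleftrightarrow>
            (finite (R a \<inter> cone2 i j) \<and> card (R a \<inter> cone2 i j) = 2))"
proof -
  note cs = assms(1) and rs = assms(3) and ij = assms(4)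
  have ij': "j \<noteq> i" using ij by simp
  have ne: "alpha i \<noteq> alpha j"
  proof
    assume "alpha i = alpha j"
    then have "alpha i i = alpha j i" by simp
    then show False using ij unfolding alpha_def by simp
  qed
  have sub: "{alpha i, alpha j} \<subseteq> R a \<inter> cone2 i j"
    using alpha_in[OF rs, of i a] alpha_in[OF rs, of j a] alpha_cone(1)[where i=i and j=j] alpha_cone(2)[where i=i and j=j] by blast
  have A: "(C a i j = 0 \<and> C a j i = 0) \<longleftrightarrow> R a \<inter> cone2 i j = {alpha i, alpha j}"
  proof
    assume "C a i j = 0 \<and> C a j i = 0"
    then have "C a i j = 0" by blast
    then show "R a \<inter> cone2 i j = {alpha i, alpha j}" by (rule dir1[OF cs rs ij])
  next
    assume h: "R a \<inter> cone2 i j = {alpha i, alpha j}"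
    have "cone2 j i = cone2 i j" by (rule cone2_sym)
    moreover have "{alpha j, alpha i} = {alpha i, alpha j}" by (rule insert_commute)
    ultimately have h2: "R a \<inter> cone2 j i = {alpha j, alpha i}" using h by simp
    have "C a i j = 0" by (rule dir2[OF cs rs ij h])
    moreover have "C a j i = 0" by (rule dir2[OF cs rs ij' h2])
    ultimately show "C a i j = 0 \<and> C a j i = 0" by blast
  qed
  have B: "R a \<inter> cone2 i j = {alpha i, alpha j} \<longleftrightarrow>
            (finite (R a \<inter> cone2 i j) \<and> card (R a \<inter> cone2 i j) = 2)"
  proof
    assume h: "R a \<inter> cone2 i j = {alpha i, alpha j}"
    have "finite {alpha i, alpha j}" by simp
    moreover have "card {alpha i, alpha j} = 2" using ne by simp
    ultimately show "finite (R a \<inter> cone2 i j) \<and> card (R a \<inter> cone2 i j) = 2" by (simp only: h)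
  next
    assume h: "finite (R a \<inter> cone2 i j) \<and> card (R a \<inter> cone2 i j) = 2"
    have "card {alpha i, alpha j} = 2" using ne by simp
    then have "card {alpha i, alpha j} = card (R a \<inter> cone2 i j)" using h by simp
    then show "R a \<inter> cone2 i j = {alpha i, alpha j}"
      using card_subset_eq[OF _ sub] h by metis
  qed
  show ?thesis using A B by blast
qed

end
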